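(* Let $\Theta$ be a causal theory over $\mathfrak L$. For every $M\in\mathfrak M$ (identified with the set of $\mathfrak L$-sentences true in $M$) and every $p\in\mathcal L_\Box$, either $M\vdash_\Box p$ or $M\vdash_\Box\neg p$ is derivable in $\mathbf S_\Theta$.
   Context: $\mathfrak L$ is a classical propositional language; $\mathfrak M$ is the set of its models, each identified with the maximal classically consistent set of $\mathfrak L$-sentences true in it. A causal rule is $\phi\triangleright\psi$ with $\phi,\psi\in\mathfrak L$; a causal theory $\Theta$ is a set of causal rules. $\mathcal L_\Box$ is generated by $\mathfrak L$ and a unary $\Box$. The sequent calculus $\mathbf S_\Theta$ derives sequents $\Gamma\vdash_\Box\Delta$ (collections of $\mathcal L_\Box$-formulas, possibly infinite; derivations well-founded, possibly infinitely branching) via: axiom $p\vdash_\Box p$; $\perp\vdash_\Box$; $\vdash_\Box\top$; weakening and contraction on both sides; classical two-sided LK rules for $\neg,\wedge,\vee,\to$ with shared contexts; $\Box$R: if $\phi_1\triangleright\psi_1,\dots,\phi_k\triangleright\psi_k\in\Theta$ and $\psi_1,\dots,\psi_k\vdash_\Box p$ is derivable, from $\Gamma\vdash_\Box\phi_1\wedge\dots\wedge\phi_k,\Delta$ infer $\Gamma\vdash_\Box\Box p,\Delta$; $\Box$L: letting $\{S_j\}_{j\in J}$ be all finite $S_j\subseteq\Theta$ with $\{\psi:\phi\triangleright\psi\in S_j\}\vdash_\Box p$ derivable, from $\Gamma,\{\phi:\phi\triangleright\psi\in S_j\}\vdash_\Box\Delta$ for all $j\in J$ infer $\Gamma,\Box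 p\vdash_\Box\Delta$; multicut: from $\Gamma\vdash_\Box p^m,\Delta$ and $\Gamma',p^n\vdash_\Box\Delta'$ ($m,n>0$) infer $\Gamma,\Gamma'\vdash_\Box\Delta,\Delta'$. *)

theory Defs
  imports Main
begin

datatype 'a pform = PAtom 'a | PBot | PTop | PNeg "'a pform"
  | PAnd "'a pform" "'a pform" | POr "'a pform" "'a pform" | PImp "'a pform" "'a pform"

datatype 'a mform = Atom 'a | Bot | Top | Neg "'a mform"
  | And "'a mform" "'a mform" | Or "'a mform" "'a mform" | Imp "'a mform" "'a mform"
  | Box "'a mform"

fun emb :: "'a pform \<Rightarrow> 'a mform" where
  "emb (PAtom a) = Atom a"
| "emb PBot = Bot"
| "emb PTop = Top"
| "emb (PNeg x) = Neg (emb x)"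
| "emb (PAnd x y) = And (emb x) (emb y)"
| "emb (POr x y) = Or (emb x) (emb y)"
| "emb (PImp x y) = Imp (emb x) (emb y)"

fun peval :: "('a \<Rightarrow> bool) \<Rightarrow> 'a pform \<Rightarrow> bool" where
  "peval v (PAtom a) = v a"
| "peval v PBot = False"
| "peval v PTop = True"
| "peval v (PNeg x) = (\<not> peval v x)"
| "peval v (PAnd x y) = (peval v x \<and> peval v y)"
| "peval v (POr x y) = (peval v x \<or> peval v y)"
| "peval v (PImp x y) = (peval v x \<longrightarrow> peval v y)"

definition models :: "'a pform set set" where
  "models = {{\<phi>. peval v \<phi>} | v. True}"

fun bdepth :: "'a mform \<Rightarrow> nat" where
  "bdepth (Atom a) = 0"
| "bdepth Bot = 0"
| "bdepth Top = 0"
| "bdepth (Neg x) = bdepth x"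
| "bdepth (And x y) = max (bdepth x) (bdepth y)"
| "bdepth (Or x y) = max (bdepth x) (bdepth y)"
| "bdepth (Imp x y) = max (bdepth x) (bdepth y)"
| "bdepth (Box x) = Suc (bdepth x)"

fun Conj :: "'a mform list \<Rightarrow> 'a mform" where
  "Conj [] = Top"
| "Conj [x] = x"
| "Conj (x # xs) = And x (Conj xs)"

type_synonym 'a ctheory = "('a pform \<times> 'a pform) set"

text \<open>The sequent calculus S_Theta, parameterised by
  ok q: whether the Box rules may be applied to Box q, and
  side q Psi: whether the side-condition sequent Psi derives q counts as derivable.
  Sequents are pairs of (possibly infinite) sets; contraction is built in.
  Derivations are well-founded (inductive), possibly infinitely branching (Box L).\<close>
inductive sc :: "'a ctheory \<Rightarrow> ('a mform \<Rightarrow> bool) \<Rightarrow> ('a mform \<Rightarrow> 'a mform set \<Rightarrow> bool)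
    \<Rightarrow> 'a mform set \<Rightarrow> 'a mform set \<Rightarrow> bool"
  for \<Theta> ok side where
  ax: "sc \<Theta> ok side {p} {p}"
| botL: "sc \<Theta> ok side {Bot} {}"
| topR: "sc \<Theta> ok side {} {Top}"
| weak: "sc \<Theta> ok side \<Gamma> \<Delta> \<Longrightarrow> \<Gamma> \<subseteq> \<Gamma>' \<Longrightarrow> \<Delta> \<subseteq> \<Delta>' \<Longrightarrow> sc \<Theta> ok side \<Gamma>' \<Delta>'"
| negL: "sc \<Theta> ok side \<Gamma> (insert A \<Delta>) \<Longrightarrow> sc \<Theta> ok side (insert (Neg A) \<Gamma>) \<Delta>"
| negR: "sc \<Theta> ok side (insert A \<Gamma>) \<Delta> \<Longrightarrow> sc \<Theta> ok side \<Gamma> (insert (Neg A) \<Delta>)"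
| andL: "sc \<Theta> ok side (insert A (insert B \<Gamma>)) \<Delta> \<Longrightarrow> sc \<Theta> ok side (insert (And A B) \<Gamma>) \<Delta>"
| andR: "sc \<Theta> ok side \<Gamma> (insert A \<Delta>) \<Longrightarrow> sc \<Theta> ok side \<Gamma> (insert B \<Delta>)
         \<Longrightarrow> sc \<Theta> ok side \<Gamma> (insert (And A B) \<Delta>)"
| orL: "sc \<Theta> ok side (insert A \<Gamma>) \<Delta> \<Longrightarrow> sc \<Theta> ok side (insert B \<Gamma>) \<Delta>
         \<Longrightarrow> sc \<Theta> ok side (insert (Or A B) \<Gamma>) \<Delta>"
| orR: "sc \<Theta> ok side \<Gamma> (insert A (insert B \<Delta>)) \<Longrightarrow> sc \<Theta> ok side \<Gamma> (insert (Or A B) \<Delta>)"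
| impL: "sc \<Theta> ok side \<Gamma> (insert A \<Delta>) \<Longrightarrow> sc \<Theta> ok side (insert B \<Gamma>) \<Delta>
         \<Longrightarrow> sc \<Theta> ok side (insert (Imp A B) \<Gamma>) \<Delta>"
| impR: "sc \<Theta> ok side (insert A \<Gamma>) (insert B \<Delta>) \<Longrightarrow> sc \<Theta> ok side \<Gamma> (insert (Imp A B) \<Delta>)"
| boxR: "ok p \<Longrightarrow> set rs \<subseteq> \<Theta> \<Longrightarrow> side p (emb ` snd ` set rs)
         \<Longrightarrow> sc \<Theta> ok side \<Gamma> (insert (Conj (map (emb \<circ> fst) rs)) \<Delta>)
         \<Longrightarrow> sc \<Theta> ok side \<Gamma> (insert (Box p) \<Delta>)"
| boxL: "ok p \<Longrightarrow> (\<forall>S. finite S \<and> S \<subseteq> \<Theta> \<and> side p (emb ` snd ` S)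
              \<longrightarrow> sc \<Theta> ok side (\<Gamma> \<union> emb ` fst ` S) \<Delta>)
         \<Longrightarrow> sc \<Theta> ok side (insert (Box p) \<Gamma>) \<Delta>"
| cut: "sc \<Theta> ok side \<Gamma> (insert p \<Delta>) \<Longrightarrow> sc \<Theta> ok side (insert p \<Gamma>') \<Delta>'
         \<Longrightarrow> sc \<Theta> ok side (\<Gamma> \<union> \<Gamma>') (\<Delta> \<union> \<Delta>')"

text \<open>Stratification by Box depth (to make the side conditions well defined):
  lv \<Theta> (Suc n) k, for k \<le> n, is derivability with Box rules restricted to Box q
  with bdepth q < k, side conditions for q being checked at level bdepth q.\<close>
primrec lv :: "'a ctheory \<Rightarrow> nat \<Rightarrow> nat \<Rightarrow> 'a mform set \<Rightarrow> 'a mform set \<Rightarrow> bool" where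
  "lv \<Theta> 0 = (\<lambda>_ _ _. False)"
| "lv \<Theta> (Suc n) = (lv \<Theta> n)(n := sc \<Theta> (\<lambda>q. bdepth q < n) (\<lambda>q \<Psi>. lv \<Theta> n (bdepth q) \<Psi> {q}))"

definition derivable :: "'a ctheory \<Rightarrow> 'a mform set \<Rightarrow> 'a mform set \<Rightarrow> bool" where
  "derivable \<Theta> \<Gamma> \<Delta> =
     sc \<Theta> (\<lambda>q. True) (\<lambda>q \<Psi>. lv \<Theta> (Suc (bdepth q)) (bdepth q) \<Psi> {q}) \<Gamma> \<Delta>"

end

theory Submission
  imports Defs
begin

lemma wk: "sc T ok sd G D \<Longrightarrow> G \<subseteq> G' \<Longrightarrow> D \<subseteq> D' \<Longrightarrow> sc T ok sd G' D'"
  by (rule sc.weak)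

lemma axin: "A \<in> G \<Longrightarrow> sc T ok sd G {A}"
  by (rule wk[OF sc.ax], auto)

lemma negin: "Neg A \<in> G \<Longrightarrow> A \<in> G \<Longrightarrow> sc T ok sd G {}"
proof -
  assume a: "Neg A \<in> G" "A \<in> G"
  have "sc T ok sd (insert (Neg A) {A}) {}" by (rule sc.negL) (simp add: sc.ax)
  thus ?thesis by (rule wk) (use a in auto)
qed

lemma neg_inv: "sc T ok sd G {Neg A} \<Longrightarrow> sc T ok sd (insert A G) {}"
proof -
  assume h: "sc T ok sd G {Neg A}"
  have "sc T ok sd (insert (Neg A) {A}) {}" by (rule sc.negL) (simp add: sc.ax)
  from sc.cut[of T ok sd G "Neg A" "{}" "{A}" "{}", OF _ this] h
  have "sc T ok sd (G \<union> {A}) {}" by simp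
  then show ?thesis by (rule wk) auto
qed

lemma conj_der: "set xs \<subseteq> G \<Longrightarrow> sc T ok sd G {Conj xs}"
proof (induction xs rule: Conj.induct)
  case 1 then show ?case using wk[OF sc.topR, where G'=G and D'="{Top}"] by auto
next
  case (2 x) then show ?case by (auto intro: axin)
next
  case (3 x y xs)
  then have "sc T ok sd G (insert x {})" "sc T ok sd G (insert (Conj (y#xs)) {})"
    by (auto intro: axin)
  then show ?case by (simp add: sc.andR)
qed

lemma main:
  fixes v and sd
  defines "G \<equiv> emb ` {\<phi>. peval v \<phi>}"
  shows "sc T (\<lambda>q. True) sd G {p} \<or> sc T (\<lambda>q. True) sd G {Neg p}"
proof (induction p)
  case (Atom a)
  show ?case
  proof (cases "v a")
    case True
    then have "Atom a \<in> G" unfolding G_def by (auto intro!: image_eqI[of _ _ "PAtom a"])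
    then show ?thesis by (auto intro: axin)
  next
    case False
    then have "Neg (Atom a) \<in> G" unfolding G_def by (auto intro!: image_eqI[of _ _ "PNeg (PAtom a)"])
    then show ?thesis by (auto intro: axin)
  qed
next
  case Bot
  have "sc T (\<lambda>q. True) sd (insert Bot G) {}" by (rule wk[OF sc.botL]) auto
  then show ?case using sc.negR[of T _ sd Bot G "{}"] by auto
next
  case Top
  show ?case using wk[OF sc.topR, where G'=G and D'="{Top}"] by auto
next
  case (Neg p)
  then show ?case
  proof
    assume "sc T (\<lambda>q. True) sd G {p}"
    then have "sc T (\<lambda>q. True) sd (insert (Neg p) G) {}" using sc.negL[of T _ sd G p "{}"] by auto
    then show ?thesis using sc.negR[of T _ sd "Neg p" G "{}"] by auto
  qed auto
next
  case (And A B)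
  show ?case
  proof (cases "sc T (\<lambda>q. True) sd G {A} \<and> sc T (\<lambda>q. True) sd G {B}")
    case True then show ?thesis using sc.andR[of T _ sd G A "{}" B] by auto
  next
    case False
    with And have "sc T (\<lambda>q. True) sd (insert A G) {} \<or> sc T (\<lambda>q. True) sd (insert B G) {}"
      using neg_inv by blast
    then have "sc T (\<lambda>q. True) sd (insert A (insert B G)) {}"
    proof
      assume "sc T (\<lambda>q. True) sd (insert A G) {}" then show ?thesis by (rule wk) auto
    next
      assume "sc T (\<lambda>q. True) sd (insert B G) {}" then show ?thesis by (rule wk) auto
    qed
    then have "sc T (\<lambda>q. True) sd (insert (And A B) G) {}" by (rule sc.andL)
    then show ?thesis using sc.negR[of T _ sd "And A B" G "{}"] by auto
  qed
next
  case (Or A B)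
  show ?case
  proof (cases "sc T (\<lambda>q. True) sd G {A} \<or> sc T (\<lambda>q. True) sd G {B}")
    case True
    then have "sc T (\<lambda>q. True) sd G (insert A (insert B {}))"
    proof
      assume "sc T (\<lambda>q. True) sd G {A}" then show ?thesis by (rule wk) auto
    next
      assume "sc T (\<lambda>q. True) sd G {B}" then show ?thesis by (rule wk) auto
    qed
    then have "sc T (\<lambda>q. True) sd G (insert (Or A B) {})" by (rule sc.orR)
    then show ?thesis by simp
  next
    case False
    with Or have "sc T (\<lambda>q. True) sd (insert A G) {}" "sc T (\<lambda>q. True) sd (insert B G) {}"
      using neg_inv by blast+
    then have "sc T (\<lambda>q. True) sd (insert (Or A B) G) {}" by (rule sc.orL)
    then show ?thesis using sc.negR[of T _ sd "Or A B" G "{}"] by auto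
  qed
next
  case (Imp A B)
  show ?case
  proof (cases "sc T (\<lambda>q. True) sd (insert A G) {} \<or> sc T (\<lambda>q. True) sd G {B}")
    case True
    then have "sc T (\<lambda>q. True) sd (insert A G) (insert B {})"
    proof
      assume "sc T (\<lambda>q. True) sd (insert A G) {}" then show ?thesis by (rule wk) auto
    next
      assume "sc T (\<lambda>q. True) sd G {B}" then show ?thesis by (rule wk) auto
    qed
    then have "sc T (\<lambda>q. True) sd G (insert (Imp A B) {})" by (rule sc.impR)
    then show ?thesis by simp
  next
    case False
    with Imp neg_inv have "sc T (\<lambda>q. True) sd G (insert A {})" "sc T (\<lambda>q. True) sd (insert B G) {}"
      by blast+
    then have "sc T (\<lambda>q. True) sd (insert (Imp A B) G) {}" by (rule sc.impL)
    then show ?thesis using sc.negR[of T _ sd "Imp A B" G "{}"] by auto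
  qed
next
  case (Box p)
  show ?case
  proof (cases "\<exists>S. finite S \<and> S \<subseteq> T \<and> sd p (emb ` snd ` S) \<and> (\<forall>x\<in>S. peval v (fst x))")
    case True
    then obtain S where S: "finite S" "S \<subseteq> T" "sd p (emb ` snd ` S)" "\<forall>x\<in>S. peval v (fst x)" by blast
    obtain rs where rs: "set rs = S" using finite_list[OF S(1)] by blast
    have "set (map (emb \<circ> fst) rs) \<subseteq> G" using rs S(4) unfolding G_def by auto
    then have "sc T (\<lambda>q. True) sd G (insert (Conj (map (emb \<circ> fst) rs)) {})" using conj_der[of "map (emb \<circ> fst) rs" G] by simp
    then have "sc T (\<lambda>q. True) sd G (insert (Box p) {})"
      by (rule sc.boxR[rotated 3]) (use rs S in auto)
    then show ?thesis by simp
  next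
    case False
    have "\<forall>S. finite S \<and> S \<subseteq> T \<and> sd p (emb ` snd ` S) \<longrightarrow> sc T (\<lambda>q. True) sd (G \<union> emb ` fst ` S) {}"
    proof (intro allI impI)
      fix S assume a: "finite S \<and> S \<subseteq> T \<and> sd p (emb ` snd ` S)"
      with False obtain x where x: "x \<in> S" "\<not> peval v (fst x)" by blast
      then have "Neg (emb (fst x)) \<in> G" unfolding G_def by (auto intro!: image_eqI[of _ _ "PNeg (fst x)"])
      then show "sc T (\<lambda>q. True) sd (G \<union> emb ` fst ` S) {}"
        by (intro negin[of "emb (fst x)"]) (use x in auto)
    qed
    then have "sc T (\<lambda>q. True) sd (insert (Box p) G) {}" by (intro sc.boxL) auto
    then show ?thesis using sc.negR[of T _ sd "Box p" G "{}"] by auto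
  qed
qed

theorem mainTheorem13:
  fixes \<Theta> :: "'a ctheory" and M :: "'a pform set" and p :: "'a mform"
  assumes "M \<in> models"
  shows "derivable \<Theta> (emb ` M) {p} \<or> derivable \<Theta> (emb ` M) {Neg p}"
proof -
  from assms obtain v where "M = {\<phi>. peval v \<phi>}" unfolding models_def by blast
  then show ?thesis unfolding derivable_def using main by blast
qed

end
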